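(* Let $n\ge1$ and let $G$ be the $n\times n$ comparability grid. Let $X\subseteq V(G)$ satisfy $|X|\le n^2/2$ and $r(X)\le n/4$. Then $|X|<n^2/3$.
   Context: For positive integers $m,n$, the $m\times n$ comparability grid is the simple graph with vertex set $\{1,\dots,m\}\times\{1,\dots,n\}$ in which distinct vertices $(i,j)$ and $(i',j')$ are adjacent iff either ($i\le i'$ and $j\le j'$) or ($i\ge i'$ and $j\ge j'$). For a graph $G$ and $X\subseteq V(G)$, the cut-rank $r(X)$ is the rank over $\mathrm{GF}(2)$ of the submatrix of the adjacency matrix of $G$ with rows indexed by $X$ and columns indexed by $V(G)\setminus X$. *)

theory Defs
  imports "HOL-Library.Z2" "HOL-Library.Product_Lexorder" "Jordan_Normal_Form.DL_Rank"
begin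

definition grid_vertices :: "nat \<Rightarrow> nat \<Rightarrow> (nat \<times> nat) set" where
  "grid_vertices m n = {1..m} \<times> {1..n}"

definition comp_grid_adj :: "nat \<times> nat \<Rightarrow> nat \<times> nat \<Rightarrow> bool" where
  "comp_grid_adj v w \<longleftrightarrow> v \<noteq> w \<and>
     ((fst v \<le> fst w \<and> snd v \<le> snd w) \<or> (fst v \<ge> fst w \<and> snd v \<ge> snd w))"

text \<open>Submatrix of the adjacency matrix over GF(2), rows indexed by X and columns by V - X
  (both listed in increasing lexicographic order).\<close>
definition cut_matrix :: "('a::linorder) set \<Rightarrow> ('a \<Rightarrow> 'a \<Rightarrow> bool) \<Rightarrow> 'a set \<Rightarrow> bit mat" where
  "cut_matrix V adj X =
     (let xs = sorted_list_of_set X; ys = sorted_list_of_set (V - X)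
      in mat (length xs) (length ys) (\<lambda>(i, j). if adj (xs ! i) (ys ! j) then 1 else 0))"

definition cut_rank :: "('a::linorder) set \<Rightarrow> ('a \<Rightarrow> 'a \<Rightarrow> bool) \<Rightarrow> 'a set \<Rightarrow> nat" where
  "cut_rank V adj X = vec_space.rank (card X) (cut_matrix V adj X)"

end

theory Submission
  imports Defs
begin

lemma rank_tri:
  fixes A :: "'a::field mat" and r c :: "nat \<Rightarrow> nat"
  assumes A: "A \<in> carrier_mat n nc" and finS: "finite S"
    and rr: "\<forall>i\<in>S. r i < n" and cc: "\<forall>j\<in>S. c j < nc"
    and diag: "\<forall>i\<in>S. A $$ (r i, c i) \<noteq> 0"
    and tri: "\<forall>i\<in>S. \<forall>j\<in>S. i < j \<longrightarrow> A $$ (r i, c j) = 0"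
  shows "card S \<le> vec_space.rank n A"
proof -
  interpret vec_space "TYPE('a)" n .
  define U where "U = (\<lambda>j. col A (c j)) ` S"
  have inj: "inj_on (\<lambda>j. col A (c j)) S"
  proof (rule inj_onI)
    fix i j assume i: "i \<in> S" and j: "j \<in> S" and e: "col A (c i) = col A (c j)"
    show "i = j"
    proof (rule ccontr)
      assume "i \<noteq> j"
      then consider "i < j" | "j < i" by linarith
      then show False
      proof cases
        case 1
        have "col A (c i) $ r i = col A (c j) $ r i" "col A (c i) $ r j = col A (c j) $ r j" using e by simp_all
        then show False using 1 i j rr cc diag tri A by auto
      next
        case 2
        have "col A (c i) $ r i = col A (c j) $ r i" "col A (c i) $ r j = col A (c j) $ r j" using e by simp_all
        then show False using 2 i j rr cc diag tri A by auto
      qed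
    qed
  qed
  have Usub: "U \<subseteq> set (cols A)" unfolding U_def using cc A by (auto simp: cols_def)
  have Ucar: "U \<subseteq> carrier_vec n" unfolding U_def using cc A by auto
  have finU: "finite U" unfolding U_def using finS by (rule finite_imageI)
  have "lin_indpt U"
  proof
    assume ld: "lin_dep U"
    obtain a w where a: "a \<in> U \<rightarrow> UNIV" "lincomb a U = 0\<^sub>v n" "w \<in> U" "a w \<noteq> 0"
      using finite_lin_dep[OF finU ld] Ucar by blast
    define T where "T = {j \<in> S. a (col A (c j)) \<noteq> 0}"
    have "T \<noteq> {}" using a(3,4) unfolding T_def U_def by auto
    moreover have "finite T" using finS unfolding T_def by simp
    ultimately have m: "Min T \<in> T" "\<forall>j\<in>T. Min T \<le> j" by auto
    define j0 where "j0 = Min T"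
    have j0: "j0 \<in> S" "a (col A (c j0)) \<noteq> 0" using m unfolding j0_def T_def by auto
    have "lincomb a U $ r j0 = (\<Sum>x\<in>U. a x * x $ r j0)"
      by (rule lincomb_index) (use j0 rr Ucar in auto)
    also have "\<dots> = (\<Sum>j\<in>S. a (col A (c j)) * col A (c j) $ r j0)"
      unfolding U_def by (rule sum.reindex[OF inj, unfolded comp_def])
    also have "\<dots> = (\<Sum>j\<in>{j0}. a (col A (c j)) * col A (c j) $ r j0)"
    proof (rule sum.mono_neutral_right[OF finS])
      show "{j0} \<subseteq> S" using j0 by auto
      show "\<forall>j\<in>S - {j0}. a (col A (c j)) * col A (c j) $ r j0 = 0"
      proof
        fix j assume j: "j \<in> S - {j0}"
        show "a (col A (c j)) * col A (c j) $ r j0 = 0"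
        proof (cases "j \<in> T")
          case True
          then have "j0 < j" using m j unfolding j0_def by force
          then show ?thesis using tri j j0 rr cc A by auto
        next
          case False
          then show ?thesis using j unfolding T_def by auto
        qed
      qed
    qed
    also have "\<dots> \<noteq> 0" using j0 diag rr cc A by auto
    finally show False using a(2) j0 rr by auto
  qed
  have "card U \<le> rank A" by (rule rank_ge_card_indpt[OF A Usub \<open>lin_indpt U\<close>])
  moreover have "card U = card S" unfolding U_def by (rule card_image[OF inj])
  ultimately show ?thesis by simp
qed
lemma rank_tri2:
  fixes A :: "'a::field mat" and r c :: "nat \<Rightarrow> nat"
  assumes A: "A \<in> carrier_mat n nc" and finS: "finite S"
    and rr: "\<forall>i\<in>S. r i < n" and cc: "\<forall>j\<in>S. c j < nc"
    and diag: "\<forall>i\<in>S. A $$ (r i, c i) \<noteq> 0"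
    and tri: "\<forall>i\<in>S. \<forall>j\<in>S. j < i \<longrightarrow> A $$ (r i, c j) = 0"
  shows "card S \<le> vec_space.rank n A"
proof -
  interpret vec_space "TYPE('a)" n .
  define U where "U = (\<lambda>j. col A (c j)) ` S"
  have inj: "inj_on (\<lambda>j. col A (c j)) S"
  proof (rule inj_onI)
    fix i j assume i: "i \<in> S" and j: "j \<in> S" and e: "col A (c i) = col A (c j)"
    show "i = j"
    proof (rule ccontr)
      assume "i \<noteq> j"
      then consider "i < j" | "j < i" by linarith
      then show False
      proof cases
        case 1
        have "col A (c i) $ r i = col A (c j) $ r i" "col A (c i) $ r j = col A (c j) $ r j" using e by simp_all
        then show False using 1 i j rr cc diag tri A by auto
      next
        case 2
        have "col A (c i) $ r i = col A (c j) $ r i" "col A (c i) $ r j = col A (c j) $ r j" using e by simp_all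
        then show False using 2 i j rr cc diag tri A by auto
      qed
    qed
  qed
  have Usub: "U \<subseteq> set (cols A)" unfolding U_def using cc A by (auto simp: cols_def)
  have Ucar: "U \<subseteq> carrier_vec n" unfolding U_def using cc A by auto
  have finU: "finite U" unfolding U_def using finS by (rule finite_imageI)
  have "lin_indpt U"
  proof
    assume ld: "lin_dep U"
    obtain a w where a: "a \<in> U \<rightarrow> UNIV" "lincomb a U = 0\<^sub>v n" "w \<in> U" "a w \<noteq> 0"
      using finite_lin_dep[OF finU ld] Ucar by blast
    define T where "T = {j \<in> S. a (col A (c j)) \<noteq> 0}"
    have "T \<noteq> {}" using a(3,4) unfolding T_def U_def by auto
    moreover have "finite T" using finS unfolding T_def by simp
    ultimately have m: "Max T \<in> T" "\<forall>j\<in>T. j \<le> Max T" by auto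
    define j0 where "j0 = Max T"
    have j0: "j0 \<in> S" "a (col A (c j0)) \<noteq> 0" using m unfolding j0_def T_def by auto
    have "lincomb a U $ r j0 = (\<Sum>x\<in>U. a x * x $ r j0)"
      by (rule lincomb_index) (use j0 rr Ucar in auto)
    also have "\<dots> = (\<Sum>j\<in>S. a (col A (c j)) * col A (c j) $ r j0)"
      unfolding U_def by (rule sum.reindex[OF inj, unfolded comp_def])
    also have "\<dots> = (\<Sum>j\<in>{j0}. a (col A (c j)) * col A (c j) $ r j0)"
    proof (rule sum.mono_neutral_right[OF finS])
      show "{j0} \<subseteq> S" using j0 by auto
      show "\<forall>j\<in>S - {j0}. a (col A (c j)) * col A (c j) $ r j0 = 0"
      proof
        fix j assume j: "j \<in> S - {j0}"
        show "a (col A (c j)) * col A (c j) $ r j0 = 0"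
        proof (cases "j \<in> T")
          case True
          then have "j < j0" using m j unfolding j0_def by force
          then show ?thesis using tri j j0 rr cc A by auto
        next
          case False
          then show ?thesis using j unfolding T_def by auto
        qed
      qed
    qed
    also have "\<dots> \<noteq> 0" using j0 diag rr cc A by auto
    finally show False using a(2) j0 rr by auto
  qed
  have "card U \<le> rank A" by (rule rank_ge_card_indpt[OF A Usub \<open>lin_indpt U\<close>])
  moreover have "card U = card S" unfolding U_def by (rule card_image[OF inj])
  ultimately show ?thesis by simp
qed

lemma cut_matrix_props:
  fixes V X :: "('a::linorder) set"
  assumes "finite V" "X \<subseteq> V"
  shows "cut_matrix V adj X \<in> carrier_mat (card X) (card (V - X))"
    and "\<And>p q. p < card X \<Longrightarrow> q < card (V - X) \<Longrightarrow> cut_matrix V adj X $$ (p, q) =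
       (if adj (sorted_list_of_set X ! p) (sorted_list_of_set (V - X) ! q) then 1 else 0)"
  unfolding cut_matrix_def Let_def by auto

lemma idx_exists:
  fixes X :: "('a::linorder) set"
  assumes "finite X" "x \<in> X"
  shows "\<exists>p. p < card X \<and> sorted_list_of_set X ! p = x"
proof -
  have "x \<in> set (sorted_list_of_set X)" using assms by simp
  then obtain p where "p < length (sorted_list_of_set X)" "sorted_list_of_set X ! p = x"
    by (auto simp: in_set_conv_nth)
  then show ?thesis by auto
qed

lemma cut_rank_ge:
  fixes V X :: "('a::linorder) set" and xf yf :: "nat \<Rightarrow> 'a"
  assumes V: "finite V" "X \<subseteq> V" and S: "finite S"
    and xX: "\<forall>i\<in>S. xf i \<in> X" and yY: "\<forall>i\<in>S. yf i \<in> V - X"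
    and d: "\<forall>i\<in>S. adj (xf i) (yf i)"
    and t: "\<forall>i\<in>S. \<forall>j\<in>S. i < j \<longrightarrow> \<not> adj (xf i) (yf j)"
  shows "card S \<le> cut_rank V adj X"
proof -
  have fX: "finite X" "finite (V - X)" using V finite_subset by auto
  define r where "r i = (SOME p. p < card X \<and> sorted_list_of_set X ! p = xf i)" for i
  define c where "c i = (SOME p. p < card (V - X) \<and> sorted_list_of_set (V - X) ! p = yf i)" for i
  have r: "\<forall>i\<in>S. r i < card X \<and> sorted_list_of_set X ! r i = xf i"
    unfolding r_def using idx_exists[OF fX(1)] xX by (metis (mono_tags, lifting) someI_ex)
  have c: "\<forall>i\<in>S. c i < card (V - X) \<and> sorted_list_of_set (V - X) ! c i = yf i"
    unfolding c_def using idx_exists[OF fX(2)] yY by (metis (mono_tags, lifting) someI_ex)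
  show ?thesis unfolding cut_rank_def
  proof (rule rank_tri[OF cut_matrix_props(1)[OF V] S, where r = r and c = c])
    show "\<forall>i\<in>S. r i < card X" using r by auto
    show "\<forall>j\<in>S. c j < card (V - X)" using c by auto
    show "\<forall>i\<in>S. cut_matrix V adj X $$ (r i, c i) \<noteq> 0"
      using r c d by (auto simp: cut_matrix_props(2)[OF V])
    show "\<forall>i\<in>S. \<forall>j\<in>S. i < j \<longrightarrow> cut_matrix V adj X $$ (r i, c j) = 0"
      using r c t by (auto simp: cut_matrix_props(2)[OF V])
  qed
qed

lemma cut_rank_ge2:
  fixes V X :: "('a::linorder) set" and xf yf :: "nat \<Rightarrow> 'a"
  assumes V: "finite V" "X \<subseteq> V" and S: "finite S"
    and xX: "\<forall>i\<in>S. xf i \<in> X" and yY: "\<forall>i\<in>S. yf i \<in> V - X"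
    and d: "\<forall>i\<in>S. adj (xf i) (yf i)"
    and t: "\<forall>i\<in>S. \<forall>j\<in>S. j < i \<longrightarrow> \<not> adj (xf i) (yf j)"
  shows "card S \<le> cut_rank V adj X"
proof -
  have fX: "finite X" "finite (V - X)" using V finite_subset by auto
  define r where "r i = (SOME p. p < card X \<and> sorted_list_of_set X ! p = xf i)" for i
  define c where "c i = (SOME p. p < card (V - X) \<and> sorted_list_of_set (V - X) ! p = yf i)" for i
  have r: "\<forall>i\<in>S. r i < card X \<and> sorted_list_of_set X ! r i = xf i"
    unfolding r_def using idx_exists[OF fX(1)] xX by (metis (mono_tags, lifting) someI_ex)
  have c: "\<forall>i\<in>S. c i < card (V - X) \<and> sorted_list_of_set (V - X) ! c i = yf i"
    unfolding c_def using idx_exists[OF fX(2)] yY by (metis (mono_tags, lifting) someI_ex)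
  show ?thesis unfolding cut_rank_def
  proof (rule rank_tri2[OF cut_matrix_props(1)[OF V] S, where r = r and c = c])
    show "\<forall>i\<in>S. r i < card X" using r by auto
    show "\<forall>j\<in>S. c j < card (V - X)" using c by auto
    show "\<forall>i\<in>S. cut_matrix V adj X $$ (r i, c i) \<noteq> 0"
      using r c d by (auto simp: cut_matrix_props(2)[OF V])
    show "\<forall>i\<in>S. \<forall>j\<in>S. j < i \<longrightarrow> cut_matrix V adj X $$ (r i, c j) = 0"
      using r c t by (auto simp: cut_matrix_props(2)[OF V])
  qed
qed

lemma mixed_cols:
  assumes XV: "X \<subseteq> grid_vertices n n"
  shows "card {i\<in>{1..n}. (\<exists>j\<in>{1..n}. (i,j)\<in>X) \<and> (\<exists>j\<in>{1..n}. (i,j)\<notin>X)}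
           \<le> 2 * cut_rank (grid_vertices n n) comp_grid_adj X"
proof -
  let ?V = "grid_vertices n n"
  have fV: "finite ?V" unfolding grid_vertices_def by simp
  define CA where "CA = {i\<in>{1..n}. (i,1)\<notin>X \<and> (\<exists>h\<in>{1..n}. (i,h)\<in>X)}"
  define CB where "CB = {i\<in>{1..n}. (i,1)\<in>X \<and> (\<exists>h\<in>{1..n}. (i,h)\<notin>X)}"
  define hA where "hA i = (SOME h. h\<in>{1..n} \<and> (i,h)\<in>X)" for i
  define hB where "hB i = (SOME h. h\<in>{1..n} \<and> (i,h)\<notin>X)" for i
  have hA: "\<forall>i\<in>CA. hA i \<in> {2..n} \<and> (i, hA i) \<in> X"
  proof
    fix i assume i: "i \<in> CA"
    then have "hA i\<in>{1..n} \<and> (i,hA i)\<in>X" unfolding hA_def CA_def by (metis (mono_tags, lifting) someI_ex mem_Collect_eq)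
    moreover have "hA i \<noteq> 1" using i calculation unfolding CA_def by auto
    ultimately show "hA i \<in> {2..n} \<and> (i, hA i) \<in> X" by auto
  qed
  have hB: "\<forall>i\<in>CB. hB i \<in> {2..n} \<and> (i, hB i) \<notin> X"
  proof
    fix i assume i: "i \<in> CB"
    then have "hB i\<in>{1..n} \<and> (i,hB i)\<notin>X" unfolding hB_def CB_def by (metis (mono_tags, lifting) someI_ex mem_Collect_eq)
    moreover have "hB i \<noteq> 1" using i calculation unfolding CB_def by auto
    ultimately show "hB i \<in> {2..n} \<and> (i, hB i) \<notin> X" by auto
  qed
  have A: "card CA \<le> cut_rank ?V comp_grid_adj X"
  proof (rule cut_rank_ge[OF fV XV, where xf = "\<lambda>i. (i, hA i)" and yf = "\<lambda>i. (i, 1)"])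
    show "finite CA" unfolding CA_def by simp
    show "\<forall>i\<in>CA. (i, hA i) \<in> X" using hA by blast
    show "\<forall>i\<in>CA. (i, 1) \<in> grid_vertices n n - X" using hA unfolding CA_def grid_vertices_def by auto
    show "\<forall>i\<in>CA. comp_grid_adj (i, hA i) (i, 1)" using hA unfolding comp_grid_adj_def by auto
    show "\<forall>i\<in>CA. \<forall>j\<in>CA. i < j \<longrightarrow> \<not> comp_grid_adj (i, hA i) (j, 1)" using hA unfolding comp_grid_adj_def by fastforce
  qed
  have B: "card CB \<le> cut_rank ?V comp_grid_adj X"
  proof (rule cut_rank_ge2[OF fV XV, where xf = "\<lambda>i. (i, 1)" and yf = "\<lambda>i. (i, hB i)"])
    show "finite CB" unfolding CB_def by simp
    show "\<forall>i\<in>CB. (i, 1) \<in> X" unfolding CB_def by blast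
    show "\<forall>i\<in>CB. (i, hB i) \<in> grid_vertices n n - X" using hB unfolding CB_def grid_vertices_def by auto
    show "\<forall>i\<in>CB. comp_grid_adj (i, 1) (i, hB i)" using hB unfolding comp_grid_adj_def by auto
    show "\<forall>i\<in>CB. \<forall>j\<in>CB. j < i \<longrightarrow> \<not> comp_grid_adj (i, 1) (j, hB j)" using hB unfolding comp_grid_adj_def by fastforce
  qed
  have sub: "{i\<in>{1..n}. (\<exists>j\<in>{1..n}. (i,j)\<in>X) \<and> (\<exists>j\<in>{1..n}. (i,j)\<notin>X)} \<subseteq> CA \<union> CB"
    unfolding CA_def CB_def by auto
  have "card {i\<in>{1..n}. (\<exists>j\<in>{1..n}. (i,j)\<in>X) \<and> (\<exists>j\<in>{1..n}. (i,j)\<notin>X)} \<le> card (CA \<union> CB)"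
    by (rule card_mono[OF _ sub]) (simp add: CA_def CB_def)
  also have "\<dots> \<le> card CA + card CB" by (rule card_Un_le)
  finally show ?thesis using A B by linarith
qed

lemma mixed_rows:
  assumes XV: "X \<subseteq> grid_vertices n n"
  shows "card {i\<in>{1..n}. (\<exists>j\<in>{1..n}. (j,i)\<in>X) \<and> (\<exists>j\<in>{1..n}. (j,i)\<notin>X)}
           \<le> 2 * cut_rank (grid_vertices n n) comp_grid_adj X"
proof -
  let ?V = "grid_vertices n n"
  have fV: "finite ?V" unfolding grid_vertices_def by simp
  define CA where "CA = {i\<in>{1..n}. (1,i)\<notin>X \<and> (\<exists>h\<in>{1..n}. (h,i)\<in>X)}"
  define CB where "CB = {i\<in>{1..n}. (1,i)\<in>X \<and> (\<exists>h\<in>{1..n}. (h,i)\<notin>X)}"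
  define hA where "hA i = (SOME h. h\<in>{1..n} \<and> (h,i)\<in>X)" for i
  define hB where "hB i = (SOME h. h\<in>{1..n} \<and> (h,i)\<notin>X)" for i
  have hA: "\<forall>i\<in>CA. hA i \<in> {2..n} \<and> (hA i, i) \<in> X"
  proof
    fix i assume i: "i \<in> CA"
    then have "hA i\<in>{1..n} \<and> (hA i, i)\<in>X" unfolding hA_def CA_def by (metis (mono_tags, lifting) someI_ex mem_Collect_eq)
    moreover have "hA i \<noteq> 1" using i calculation unfolding CA_def by auto
    ultimately show "hA i \<in> {2..n} \<and> (hA i, i) \<in> X" by auto
  qed
  have hB: "\<forall>i\<in>CB. hB i \<in> {2..n} \<and> (hB i, i) \<notin> X"
  proof
    fix i assume i: "i \<in> CB"
    then have "hB i\<in>{1..n} \<and> (hB i, i)\<notin>X" unfolding hB_def CB_def by (metis (mono_tags, lifting) someI_ex mem_Collect_eq)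
    moreover have "hB i \<noteq> 1" using i calculation unfolding CB_def by auto
    ultimately show "hB i \<in> {2..n} \<and> (hB i, i) \<notin> X" by auto
  qed
  have A: "card CA \<le> cut_rank ?V comp_grid_adj X"
  proof (rule cut_rank_ge[OF fV XV, where xf = "\<lambda>i. (hA i, i)" and yf = "\<lambda>i. (1, i)"])
    show "finite CA" unfolding CA_def by simp
    show "\<forall>i\<in>CA. (hA i, i) \<in> X" using hA by blast
    show "\<forall>i\<in>CA. (1, i) \<in> grid_vertices n n - X" using hA unfolding CA_def grid_vertices_def by auto
    show "\<forall>i\<in>CA. comp_grid_adj (hA i, i) (1, i)" using hA unfolding comp_grid_adj_def by auto
    show "\<forall>i\<in>CA. \<forall>j\<in>CA. i < j \<longrightarrow> \<not> comp_grid_adj (hA i, i) (1, j)" using hA unfolding comp_grid_adj_def by fastforce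
  qed
  have B: "card CB \<le> cut_rank ?V comp_grid_adj X"
  proof (rule cut_rank_ge2[OF fV XV, where xf = "\<lambda>i. (1, i)" and yf = "\<lambda>i. (hB i, i)"])
    show "finite CB" unfolding CB_def by simp
    show "\<forall>i\<in>CB. (1, i) \<in> X" unfolding CB_def by blast
    show "\<forall>i\<in>CB. (hB i, i) \<in> grid_vertices n n - X" using hB unfolding CB_def grid_vertices_def by auto
    show "\<forall>i\<in>CB. comp_grid_adj (1, i) (hB i, i)" using hB unfolding comp_grid_adj_def by auto
    show "\<forall>i\<in>CB. \<forall>j\<in>CB. j < i \<longrightarrow> \<not> comp_grid_adj (1, i) (hB j, j)" using hB unfolding comp_grid_adj_def by fastforce
  qed
  have sub: "{i\<in>{1..n}. (\<exists>j\<in>{1..n}. (j,i)\<in>X) \<and> (\<exists>j\<in>{1..n}. (j,i)\<notin>X)} \<subseteq> CA \<union> CB"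
    unfolding CA_def CB_def by auto
  have "card {i\<in>{1..n}. (\<exists>j\<in>{1..n}. (j,i)\<in>X) \<and> (\<exists>j\<in>{1..n}. (j,i)\<notin>X)} \<le> card (CA \<union> CB)"
    by (rule card_mono[OF _ sub]) (simp add: CA_def CB_def)
  also have "\<dots> \<le> card CA + card CB" by (rule card_Un_le)
  finally show ?thesis using A B by linarith
qed

theorem mainTheorem8:
  fixes n :: nat and X :: "(nat \<times> nat) set"
  assumes "n \<ge> 1"
    and "X \<subseteq> grid_vertices n n"
    and "real (card X) \<le> real n ^ 2 / 2"
    and "real (cut_rank (grid_vertices n n) comp_grid_adj X) \<le> real n / 4"
  shows "real (card X) < real n ^ 2 / 3"
proof -
  let ?t = "cut_rank (grid_vertices n n) comp_grid_adj X"
  let ?N = "{1..n}"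
  define MC where "MC = {i\<in>{1..n}. (\<exists>j\<in>{1..n}. (i,j)\<in>X) \<and> (\<exists>j\<in>{1..n}. (i,j)\<notin>X)}"
  define MR where "MR = {i\<in>{1..n}. (\<exists>j\<in>{1..n}. (j,i)\<in>X) \<and> (\<exists>j\<in>{1..n}. (j,i)\<notin>X)}"
  have t4: "4 * ?t \<le> n" using assms(4) by simp
  have a: "2 * card MC \<le> n" using mixed_cols[OF assms(2)] t4 unfolding MC_def by linarith
  have b: "2 * card MR \<le> n" using mixed_rows[OF assms(2)] t4 unfolding MR_def by linarith
  have ab: "4 * (card MC * card MR) \<le> n * n"
    using mult_le_mono[OF a b] by (simp add: algebra_simps)
  have fMC: "finite MC" "finite MR" unfolding MC_def MR_def by simp_all
  have "card MC < card ?N" using a assms(1) by simp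
  then obtain c0 where c0: "c0 \<in> ?N" "c0 \<notin> MC"
    using card_mono[OF fMC(1), of ?N] by fastforce
  have "card MR < card ?N" using b assms(1) by simp
  then obtain r0 where r0: "r0 \<in> ?N" "r0 \<notin> MR"
    using card_mono[OF fMC(2), of ?N] by fastforce
  have XV: "X \<subseteq> ?N \<times> ?N" using assms(2) unfolding grid_vertices_def .
  show ?thesis
  proof (cases "(c0, r0) \<in> X")
    case True
    have row: "\<forall>i\<in>?N. (i, r0) \<in> X" using r0 True c0 unfolding MR_def by blast
    have col: "\<forall>j\<in>?N. (c0, j) \<in> X" using c0 True r0 unfolding MC_def by blast
    have "?N \<times> ?N \<subseteq> X \<union> MC \<times> MR"
    proof
      fix p assume p: "p \<in> ?N \<times> ?N"
      obtain i j where ij: "p = (i, j)" by (cases p)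
      show "p \<in> X \<union> MC \<times> MR"
      proof (cases "i \<in> MC \<and> j \<in> MR")
        case True then show ?thesis using ij by auto
      next
        case False
        then consider "i \<notin> MC" | "j \<notin> MR" by blast
        then show ?thesis
        proof cases
          case 1
          have "(i, r0) \<in> X" using row p ij by auto
          then show ?thesis using 1 p ij r0 unfolding MC_def by auto
        next
          case 2
          have "(c0, j) \<in> X" using col p ij by auto
          then show ?thesis using 2 p ij c0 unfolding MR_def by auto
        qed
      qed
    qed
    then have "card (?N \<times> ?N) \<le> card (X \<union> MC \<times> MR)"
      by (rule card_mono[rotated]) (use fMC XV finite_subset in auto)
    also have "\<dots> \<le> card X + card (MC \<times> MR)" by (rule card_Un_le)
    finally have "n * n \<le> card X + card MC * card MR" by (simp add: card_cartesian_product)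
    then have "real n * real n \<le> real (card X) + real (card MC) * real (card MR)"
      by (metis of_nat_add of_nat_le_iff of_nat_mult)
    moreover have "4 * (real (card MC) * real (card MR)) \<le> real n * real n"
      using ab by (metis of_nat_le_iff of_nat_mult of_nat_numeral)
    moreover have "real n * real n \<ge> 1" using mult_le_mono[OF assms(1) assms(1)] by (metis nat_mult_1 of_nat_1 of_nat_le_iff of_nat_mult)
    ultimately show ?thesis using assms(3) unfolding power2_eq_square by linarith
  next
    case False
    have row: "\<forall>i\<in>?N. (i, r0) \<notin> X" using r0 False c0 unfolding MR_def by blast
    have col: "\<forall>j\<in>?N. (c0, j) \<notin> X" using c0 False r0 unfolding MC_def by blast
    have "X \<subseteq> MC \<times> MR"
    proof
      fix p assume p: "p \<in> X"
      obtain i j where ij: "p = (i, j)" by (cases p)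
      have ij': "i \<in> ?N" "j \<in> ?N" using p ij XV by auto
      have "i \<in> MC" using row ij' p ij r0 unfolding MC_def by blast
      moreover have "j \<in> MR" using col ij' p ij c0 unfolding MR_def by blast
      ultimately show "p \<in> MC \<times> MR" using ij by auto
    qed
    then have "card X \<le> card (MC \<times> MR)" by (rule card_mono[rotated]) (use fMC in auto)
    then have "card X \<le> card MC * card MR" by (simp add: card_cartesian_product)
    then have "4 * card X \<le> n * n" using ab by linarith
    then have "4 * real (card X) \<le> real n * real n"
      by (metis of_nat_le_iff of_nat_mult of_nat_numeral)
    moreover have "real n * real n \<ge> 1" using mult_le_mono[OF assms(1) assms(1)] by (metis nat_mult_1 of_nat_1 of_nat_le_iff of_nat_mult)
    ultimately show ?thesis unfolding power2_eq_square by linarith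
  qed
qed

end
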